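(* Let $A\in\mathbb{R}^{n\times n}$ be symmetric with smallest eigenvalue $\alpha_n$, $g\in\mathbb{R}^n$ nonzero, $\Delta>0$, and let $x_{opt}$ be a global minimizer of $\frac12x^TAx+x^Tg$ subject to $\|x\|\le\Delta$ with multiplier $\lambda_{opt}$, in the easy case $\lambda_{opt}>-\alpha_n$. Suppose $\|x_{opt}\|=\Delta$. Let $M=\begin{pmatrix}-A&gg^T/\Delta^2\\ I&-A\end{pmatrix}$ and let $y=(y_1^T,y_2^T)^T\in\mathbb{R}^{2n}$ ($y_1,y_2\in\mathbb{R}^n$) be a unit-length eigenvector of $M$ associated with $\lambda_{opt}$. Then, with $A_{opt}=A+\lambda_{opt}I$, $$\frac{\|y_1\|}{\|y_2\|}=\frac{\Delta}{\|A_{opt}^{-1}x_{opt}\|}.$$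
   Context: Norms are Euclidean. The multiplier satisfies $\lambda_{opt}\ge0$, $(A+\lambda_{opt}I)x_{opt}=-g$, $\lambda_{opt}(\Delta-\|x_{opt}\|)=0$, $A+\lambda_{opt}I\succeq0$. *)

theory Defs
  imports "HOL-Analysis.Analysis"
begin

definition is_eigenvalue :: "real^'m^'m \<Rightarrow> real \<Rightarrow> bool" where
  "is_eigenvalue B mu \<longleftrightarrow> (\<exists>v. v \<noteq> 0 \<and> B *v v = mu *s v)"

definition is_smallest_eigenvalue :: "real^'m^'m \<Rightarrow> real \<Rightarrow> bool" where
  "is_smallest_eigenvalue B alpha \<longleftrightarrow>
     is_eigenvalue B alpha \<and> (\<forall>mu. is_eigenvalue B mu \<longrightarrow> alpha \<le> mu)"

definition trs_obj :: "real^'n^'n \<Rightarrow> real^'n \<Rightarrow> real^'n \<Rightarrow> real" where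
  "trs_obj A g x = (1/2) * (x \<bullet> (A *v x)) + x \<bullet> g"

text \<open>The 2n x 2n block matrix  M = [[-A, g g^T / Delta^2], [I, -A]],
  indexed by 'n + 'n (Inl = first block, Inr = second block).\<close>
definition blockM :: "real^'n^'n \<Rightarrow> real^'n \<Rightarrow> real \<Rightarrow> real^('n + 'n)^('n + 'n)" where
  "blockM A g Delta = (\<chi> i j. case (i, j) of
       (Inl a, Inl b) \<Rightarrow> - (A $ a $ b)
     | (Inl a, Inr b) \<Rightarrow> (g $ a) * (g $ b) / Delta^2
     | (Inr a, Inl b) \<Rightarrow> (if a = b then 1 else 0)
     | (Inr a, Inr b) \<Rightarrow> - (A $ a $ b))"

definition top_part :: "real^('n + 'n) \<Rightarrow> real^'n" where
  "top_part y = (\<chi> i. y $ Inl i)"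

definition bot_part :: "real^('n + 'n) \<Rightarrow> real^'n" where
  "bot_part y = (\<chi> i. y $ Inr i)"

end

theory Submission
  imports Defs
begin

theorem lemma5p6:
  fixes A :: "real^'n^'n" and g x_opt :: "real^'n"
    and Delta lam alpha :: real and y :: "real^('n + 'n)"
  assumes symA: "transpose A = A"
    and alpha: "is_smallest_eigenvalue A alpha"
    and g_nz: "g \<noteq> 0"
    and Delta_pos: "Delta > 0"
    and feas: "norm x_opt \<le> Delta"
    and glob_min: "\<forall>x. norm x \<le> Delta \<longrightarrow> trs_obj A g x_opt \<le> trs_obj A g x"
    and lam_nonneg: "lam \<ge> 0"
    and stat: "(A + mat lam) *v x_opt = - g"
    and compl: "lam * (Delta - norm x_opt) = 0"
    and psd: "\<forall>v. 0 \<le> v \<bullet> ((A + mat lam) *v v)"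
    and easy: "lam > - alpha"
    and bdry: "norm x_opt = Delta"
    and y_unit: "norm y = 1"
    and y_eig: "blockM A g Delta *v y = lam *s y"
  shows "norm (top_part y) / norm (bot_part y)
           = Delta / norm (matrix_inv (A + mat lam) *v x_opt)"
proof -
  have h: "\<And>P (a::real) b. (if P then a else 0) * b = (if P then a * b else 0)" by simp
  define B where "B = A + mat lam"
  define y1 where "y1 = top_part y"
  define y2 where "y2 = bot_part y"
  define c where "c = (g \<bullet> y2) / Delta^2"
  have sumsplit: "\<And>f::('n+'n) \<Rightarrow> real. sum f UNIV = (\<Sum>b\<in>UNIV. f (Inl b)) + (\<Sum>b\<in>UNIV. f (Inr b))"
    by (subst UNIV_Plus_UNIV[symmetric], subst sum.Plus) auto
  have matl: "\<And>v::real^'n. mat lam *v v = lam *s v"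
  proof -
    show "\<And>v::real^'n. mat lam *v v = lam *s v"
      by (simp add: vec_eq_iff matrix_vector_mult_def mat_def h)
  qed
  have Bv: "\<And>v. B *v v = A *v v + lam *s v"
    by (simp add: B_def matrix_vector_mult_add_rdistrib matl)
  have e1: "B *v y1 = c *s g"
  proof (subst vec_eq_iff, intro allI)
    fix a
    have "(blockM A g Delta *v y) $ Inl a = lam * y $ Inl a" using y_eig by simp
    hence "(\<Sum>b\<in>UNIV. - (A $ a $ b) * y $ Inl b) + (\<Sum>b\<in>UNIV. g $ a * g $ b / Delta^2 * y $ Inr b)
           = lam * y $ Inl a"
      unfolding matrix_vector_mult_def blockM_def by (simp add: sumsplit)
    moreover have "(\<Sum>b\<in>UNIV. g $ a * g $ b / Delta^2 * y $ Inr b) = c * g $ a"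
      unfolding c_def y2_def bot_part_def inner_vec_def
      by (simp add: sum_distrib_left sum_divide_distrib mult_ac)
    moreover have "(B *v y1) $ a = (\<Sum>b\<in>UNIV. A $ a $ b * y $ Inl b) + lam * y $ Inl a"
      unfolding Bv y1_def top_part_def
      by (simp add: matrix_vector_mult_def)
    ultimately show "(B *v y1) $ a = (c *s g) $ a"
      by (simp add: sum_negf)
  qed
  have e2: "y1 = B *v y2"
  proof (subst vec_eq_iff, intro allI)
    fix a
    have "(blockM A g Delta *v y) $ Inr a = lam * y $ Inr a" using y_eig by simp
    hence "(\<Sum>b\<in>UNIV. (if a = b then 1 else 0) * y $ Inl b) + (\<Sum>b\<in>UNIV. - (A $ a $ b) * y $ Inr b)
           = lam * y $ Inr a"
      unfolding matrix_vector_mult_def blockM_def by (simp add: sumsplit)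
    moreover have "(B *v y2) $ a = (\<Sum>b\<in>UNIV. A $ a $ b * y $ Inr b) + lam * y $ Inr a"
      unfolding Bv y2_def bot_part_def
      by (simp add: matrix_vector_mult_def)
    ultimately show "y1 $ a = (B *v y2) $ a"
      by (simp add: sum_negf y1_def top_part_def h)
  qed
  have ker: "\<forall>v. B *v v = 0 \<longrightarrow> v = 0"
  proof (intro allI impI, rule ccontr)
    fix v assume "B *v v = 0" "v \<noteq> 0"
    hence "A *v v = (- lam) *s v"
      unfolding Bv by (simp add: vec_eq_iff eq_neg_iff_add_eq_0)
    hence "is_eigenvalue A (- lam)" using \<open>v \<noteq> 0\<close> unfolding is_eigenvalue_def by blast
    thus False using alpha easy unfolding is_smallest_eigenvalue_def by force
  qed
  then obtain L where "L ** B = mat 1" using matrix_left_invertible_ker by blast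
  hence inv: "invertible B" using invertible_left_inverse by blast
  define Bi where "Bi = matrix_inv B"
  have BBi: "B ** Bi = mat 1" "Bi ** B = mat 1"
    using someI_ex[OF inv[unfolded invertible_def]] unfolding Bi_def matrix_inv_def by auto
  have "B *v ((- c) *s x_opt) = (- c) *s (B *v x_opt)" by (rule vector_scalar_commute)
  also have "\<dots> = c *s g" using stat unfolding B_def by (simp add: vec_eq_iff)
  finally have "B *v y1 = B *v ((- c) *s x_opt)" using e1 by simp
  hence "B *v (y1 - (- c) *s x_opt) = 0" by (simp only: matrix_vector_mult_diff_distrib) simp
  hence "y1 - (- c) *s x_opt = 0" using ker by blast
  hence y1x: "y1 = (- c) *s x_opt" by (simp only: right_minus_eq)
  have "y2 = Bi *v y1" using e2 BBi by (simp add: matrix_vector_mul_assoc)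
  hence y2x: "y2 = (- c) *s (Bi *v x_opt)" using y1x by (simp only: vector_scalar_commute)
  have "c \<noteq> 0"
  proof
    assume "c = 0"
    hence "y1 = 0" "y2 = 0" using y1x y2x by auto
    hence "y = 0" unfolding y1_def y2_def top_part_def bot_part_def vec_eq_iff
      by (metis sum.exhaust zero_index vec_lambda_beta)
    thus False using y_unit by simp
  qed
  show ?thesis
    unfolding y1_def[symmetric] y2_def[symmetric] B_def[symmetric] Bi_def[symmetric]
    using \<open>c \<noteq> 0\<close> by (simp add: y1x y2x scalar_mult_eq_scaleR bdry)
qed

end
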